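(* Let $\tau>0$, $\varepsilon\ne0$, $\kappa_{12}\in\mathbb R$. The system on $T^*S^2=\{(\gamma,p)\in\mathbb R^6:\langle\gamma,\gamma\rangle=1,\langle\gamma,p\rangle=0\}$ $$\dot\gamma_1=\tfrac{\varepsilon^2}\tau p_1,\ \dot\gamma_2=\tfrac{\varepsilon^2}\tau p_2,\ \dot\gamma_3=\tfrac{\varepsilon^2}\tau p_3,\quad \dot p_1=\tfrac1\tau\kappa_{12}p_2+\mu\gamma_1,\ \dot p_2=-\tfrac1\tau\kappa_{12}p_1+\mu\gamma_2,\ \dot p_3=\mu\gamma_3,$$ $$\mu=\frac{\kappa_{12}}\tau(p_1\gamma_2-p_2\gamma_1)-\frac{\varepsilon^2}\tau(p_1^2+p_2^2+p_3^2),$$ which is Hamiltonian with Hamiltonian $h=\frac{\varepsilon^2}{2\tau}(p_1^2+p_2^2+p_3^2)$ with respect to the symplectic form $\big(\sum_{i=1}^3dp_i\wedge d\gamma_i+\frac{\kappa_{12}}{\varepsilon^2}d\gamma_1\wedge d\gamma_2\big)|_{T^*S^2}$, is Liouville integrable on $T^*S^2$ with the first integrals $h$ and $$\Phi(\gamma,p)=\gamma_1p_2-\gamma_2p_1+\frac{\kappa_{12}}{2\varepsilon^2}(\gamma_1^2+\gamma_2^2).$$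
   Context: This is the reduced system of the three-dimensional Demchenko case without twisting: a balanced ball with gyroscope, whose inertia operator is proportional to the identity, rolling without slipping and twisting over a fixed sphere, with gyroscopic matrix $\kappa=\kappa_{12}\mathbf e_1\wedge\mathbf e_2$ and $\varepsilon=b/(b\pm a)$. *)

theory Defs
  imports "HOL-Analysis.Analysis"
begin

type_synonym pt = "(real^3) \<times> (real^3)"   (* (gamma, p) in R^6 *)

definition TS2 :: "pt set" where
  "TS2 = {(g, p). g \<bullet> g = 1 \<and> g \<bullet> p = 0}"

text \<open>Tangent space of T*S^2 at x (kernel of the differentials of the constraints).\<close>
definition tangent_TS2 :: "pt \<Rightarrow> pt set" where
  "tangent_TS2 x = {(a, b). fst x \<bullet> a = 0 \<and> a \<bullet> snd x + fst x \<bullet> b = 0}"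

text \<open>The constant 2-form  sum_i dp_i /\ dgamma_i + c dgamma_1 /\ dgamma_2 on R^6
  (with (alpha /\ beta)(u,v) = alpha(u) beta(v) - alpha(v) beta(u)).\<close>
definition omega2 :: "real \<Rightarrow> pt \<Rightarrow> pt \<Rightarrow> real" where
  "omega2 c u v =
     (\<Sum>i\<in>UNIV. snd u $ i * fst v $ i - snd v $ i * fst u $ i)
     + c * (fst u $ 1 * fst v $ 2 - fst v $ 1 * fst u $ 2)"

definition is_ham_vf :: "(pt \<Rightarrow> pt set) \<Rightarrow> (pt \<Rightarrow> pt \<Rightarrow> real) \<Rightarrow> (pt \<Rightarrow> real) \<Rightarrow> pt \<Rightarrow> pt \<Rightarrow> bool" where
  "is_ham_vf T w f x X \<longleftrightarrow>
     X \<in> T x \<and> (\<forall>v\<in>T x. w X v = - frechet_derivative f (at x) v)"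

definition liouville_integrable2 ::
  "pt set \<Rightarrow> (pt \<Rightarrow> pt set) \<Rightarrow> (pt \<Rightarrow> pt \<Rightarrow> real) \<Rightarrow> (pt \<Rightarrow> pt)
     \<Rightarrow> (pt \<Rightarrow> real) \<Rightarrow> (pt \<Rightarrow> real) \<Rightarrow> bool" where
  "liouville_integrable2 M T w V f1 f2 \<longleftrightarrow>
     (\<forall>x\<in>M. \<forall>u\<in>T x. (\<forall>v\<in>T x. w u v = 0) \<longrightarrow> u = 0)
   \<and> (\<forall>x\<in>M. is_ham_vf T w f1 x (V x))
   \<and> (\<forall>x\<in>M. frechet_derivative f1 (at x) (V x) = 0
              \<and> frechet_derivative f2 (at x) (V x) = 0)
   \<and> (\<forall>x\<in>M. \<forall>X1 X2. is_ham_vf T w f1 x X1 \<longrightarrow> is_ham_vf T w f2 x X2 \<longrightarrow> w X1 X2 = 0)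
   \<and> (let S = {x\<in>M. \<forall>a b::real. (\<forall>v\<in>T x. a * frechet_derivative f1 (at x) v
                                          + b * frechet_derivative f2 (at x) v = 0)
                                 \<longrightarrow> a = 0 \<and> b = 0}
      in openin (top_of_set M) S \<and> M \<subseteq> closure S)"

definition demchenko_field :: "real \<Rightarrow> real \<Rightarrow> real \<Rightarrow> pt \<Rightarrow> pt" where
  "demchenko_field \<tau> \<epsilon> k x =
     (let g = fst x; p = snd x;
          \<mu> = k / \<tau> * (p$1 * g$2 - p$2 * g$1) - \<epsilon>^2 / \<tau> * (p$1^2 + p$2^2 + p$3^2)
      in (vector [\<epsilon>^2/\<tau> * p$1, \<epsilon>^2/\<tau> * p$2, \<epsilon>^2/\<tau> * p$3],
          vector [1/\<tau> * k * p$2 + \<mu> * g$1, - 1/\<tau> * k * p$1 + \<mu> * g$2, \<mu> * g$3]))"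

definition demchenko_h :: "real \<Rightarrow> real \<Rightarrow> pt \<Rightarrow> real" where
  "demchenko_h \<tau> \<epsilon> x = \<epsilon>^2 / (2*\<tau>) * ((snd x)$1^2 + (snd x)$2^2 + (snd x)$3^2)"

definition demchenko_Phi :: "real \<Rightarrow> real \<Rightarrow> pt \<Rightarrow> real" where
  "demchenko_Phi \<epsilon> k x = (fst x)$1 * (snd x)$2 - (fst x)$2 * (snd x)$1
      + k / (2 * \<epsilon>^2) * ((fst x)$1^2 + (fst x)$2^2)"

end

theory Submission imports Defs begin
lemma comp_der: "((\<lambda>x::pt. fst x $ i) has_derivative (\<lambda>v. fst v $ i)) F"
  "((\<lambda>x::pt. snd x $ i) has_derivative (\<lambda>v. snd v $ i)) F"
  by (auto intro!: bounded_linear_imp_has_derivative bounded_linear_compose[OF bounded_linear_vec_nth] bounded_linear_fst bounded_linear_snd)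

lemma aux2: "X = 2*Y \<Longrightarrow> (c::real)/(2*d)*X = c/d*Y" by simp
lemma aux4: "A = B \<Longrightarrow> X = 2*Y \<Longrightarrow> A + (c::real)/(2*d)*X = B + c/d*Y" by simp

lemma dh: "frechet_derivative (demchenko_h \<tau> \<epsilon>) (at x) =
  (\<lambda>v. \<epsilon>^2/\<tau> * (snd x $1 * snd v $1 + snd x $2 * snd v $2 + snd x $3 * snd v $3))"
proof -
  have "(demchenko_h \<tau> \<epsilon> has_derivative (\<lambda>v. \<epsilon>^2/\<tau> * (snd x $1 * snd v $1 + snd x $2 * snd v $2 + snd x $3 * snd v $3))) (at x)"
    unfolding demchenko_h_def power2_eq_square
    apply (rule has_derivative_eq_rhs)
    apply (rule comp_der | rule has_derivative_add | rule has_derivative_diff | rule has_derivative_mult | rule has_derivative_const)+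
    apply (rule ext)
    apply (simp only: mult_zero_left add_0_right)
    apply (rule aux2 aux4)
    apply algebra+
    done
  then show ?thesis by (rule sym[OF frechet_derivative_at])
qed

lemma dPhi: "frechet_derivative (demchenko_Phi \<epsilon> k) (at x) =
  (\<lambda>v. fst v $1 * snd x $2 + fst x $1 * snd v $2 - fst v $2 * snd x $1 - fst x $2 * snd v $1
     + k / \<epsilon>^2 * (fst x $1 * fst v $1 + fst x $2 * fst v $2))"
proof -
  have "(demchenko_Phi \<epsilon> k has_derivative (\<lambda>v. fst v $1 * snd x $2 + fst x $1 * snd v $2 - fst v $2 * snd x $1 - fst x $2 * snd v $1
     + k / \<epsilon>^2 * (fst x $1 * fst v $1 + fst x $2 * fst v $2))) (at x)"
    unfolding demchenko_Phi_def power2_eq_square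
    apply (rule has_derivative_eq_rhs)
    apply (rule comp_der | rule has_derivative_add | rule has_derivative_diff | rule has_derivative_mult | rule has_derivative_const)+
    apply (rule ext)
    apply (simp only: mult_zero_left add_0_right)
    apply (rule aux2 aux4)
    apply algebra+
    done
  then show ?thesis by (rule sym[OF frechet_derivative_at])
qed

lemma inner3: "(a::real^3) \<bullet> b = a$1*b$1 + a$2*b$2 + a$3*b$3"
  by (simp add: inner_vec_def sum_3)

lemma vec3_eq: "(a::real^3) = b \<longleftrightarrow> a$1 = b$1 \<and> a$2 = b$2 \<and> a$3 = b$3"
  by (simp add: vec_eq_iff forall_3)

lemma omega2_alt: "omega2 c u v = snd u \<bullet> fst v - snd v \<bullet> fst u + c*(fst u$1*fst v$2 - fst v$1*fst u$2)"
  by (simp add: omega2_def inner_vec_def sum_subtractf)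

lemma nondeg:
  assumes "x \<in> TS2" "u \<in> tangent_TS2 x" "\<forall>v\<in>tangent_TS2 x. omega2 c u v = 0"
  shows "u = 0"
proof -
  obtain g p where x: "x = (g,p)" by (cases x)
  obtain a b where u: "u = (a,b)" by (cases u)
  from assms have gg: "g\<bullet>g = 1" "g\<bullet>p = 0" and ga: "g\<bullet>a = 0" "a\<bullet>p + g\<bullet>b = 0"
    by (auto simp: x u TS2_def tangent_TS2_def)
  define \<beta> where "\<beta> = a - (a\<bullet>g) *\<^sub>R g"
  have "((0::real^3), \<beta>) \<in> tangent_TS2 x" using gg
    by (simp add: x tangent_TS2_def \<beta>_def inner_diff_right inner_commute)
  then have "omega2 c u (0,\<beta>) = 0" using assms by blast
  moreover have "omega2 c u (0,\<beta>) = - (a\<bullet>a)" using ga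
    by (simp add: omega2_alt u \<beta>_def inner_diff_right inner_commute)
  ultimately have a0: "a = 0" by simp
  define \<gamma> where "\<gamma> = b - (b\<bullet>g) *\<^sub>R g"
  have "(\<gamma>, - (\<gamma>\<bullet>p) *\<^sub>R g) \<in> tangent_TS2 x" using gg
    by (simp add: x tangent_TS2_def \<gamma>_def inner_diff_right inner_diff_left inner_commute)
  then have "omega2 c u (\<gamma>, - (\<gamma>\<bullet>p) *\<^sub>R g) = 0" using assms by blast
  moreover have "omega2 c u (\<gamma>, - (\<gamma>\<bullet>p) *\<^sub>R g) = b\<bullet>b" using ga a0
    by (simp add: omega2_alt u \<gamma>_def inner_diff_right inner_commute)
  ultimately have "b = 0" by simp
  then show ?thesis using a0 u by (simp add: zero_prod_def)
qed

lemma omega2_diff: "omega2 c (u - u') v = omega2 c u v - omega2 c u' v"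
  unfolding omega2_alt inner3 fst_diff snd_diff vector_minus_component by algebra

lemma omega2_antisym: "omega2 c u v = - omega2 c v u"
  unfolding omega2_alt inner3 by algebra

lemma tangent_diff: "u \<in> tangent_TS2 x \<Longrightarrow> u' \<in> tangent_TS2 x \<Longrightarrow> u - u' \<in> tangent_TS2 x"
  by (cases u; cases u'; cases x) (simp add: tangent_TS2_def inner_diff_left inner_diff_right)


lemma TS2_comp: "(g,p) \<in> TS2 \<longleftrightarrow> g$1*g$1+g$2*g$2+g$3*g$3 = 1 \<and> g$1*p$1+g$2*p$2+g$3*p$3 = 0"
  by (simp add: TS2_def inner3)

lemma tan_comp: "(a,b) \<in> tangent_TS2 (g,p) \<longleftrightarrow> g$1*a$1+g$2*a$2+g$3*a$3 = 0 \<and>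
   a$1*p$1+a$2*p$2+a$3*p$3 + (g$1*b$1+g$2*b$2+g$3*b$3) = 0"
  by (simp add: tangent_TS2_def inner3)

lemma field_comp: "demchenko_field \<tau> \<epsilon> k (g,p) = (vector [\<epsilon>^2/\<tau> * p$1, \<epsilon>^2/\<tau> * p$2, \<epsilon>^2/\<tau> * p$3],
  vector [1/\<tau> * k * p$2 + (k / \<tau> * (p$1 * g$2 - p$2 * g$1) - \<epsilon>^2 / \<tau> * (p$1^2 + p$2^2 + p$3^2)) * g$1,
          - 1/\<tau> * k * p$1 + (k / \<tau> * (p$1 * g$2 - p$2 * g$1) - \<epsilon>^2 / \<tau> * (p$1^2 + p$2^2 + p$3^2)) * g$2,
          (k / \<tau> * (p$1 * g$2 - p$2 * g$1) - \<epsilon>^2 / \<tau> * (p$1^2 + p$2^2 + p$3^2)) * g$3])"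
  by (simp add: demchenko_field_def Let_def)

lemma fi_h:
  assumes "x \<in> TS2"
  shows "frechet_derivative (demchenko_h \<tau> \<epsilon>) (at x) (demchenko_field \<tau> \<epsilon> k x) = 0"
proof -
  obtain g p where x: "x = (g,p)" by (cases x)
  have gp: "g$1*p$1+g$2*p$2+g$3*p$3 = 0" using assms by (simp add: x TS2_comp)
  show ?thesis unfolding dh x field_comp
    using gp by (simp only: vector_3 fst_conv snd_conv) algebra
qed

lemma fi_Phi:
  assumes "\<epsilon> \<noteq> 0"
  shows "frechet_derivative (demchenko_Phi \<epsilon> k) (at x) (demchenko_field \<tau> \<epsilon> k x) = 0"
proof -
  obtain g p where x: "x = (g,p)" by (cases x)
  have ei: "\<epsilon>^2 * inverse (\<epsilon>^2) = 1" using assms by simp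
  show ?thesis unfolding dPhi x field_comp
    using ei by (simp only: vector_3 fst_conv snd_conv) algebra
qed

lemma hamV:
  assumes "\<epsilon> \<noteq> 0" "x \<in> TS2"
  shows "is_ham_vf tangent_TS2 (omega2 (k/\<epsilon>^2)) (demchenko_h \<tau> \<epsilon>) x (demchenko_field \<tau> \<epsilon> k x)"
proof -
  obtain g p where x: "x = (g,p)" by (cases x)
  have gg: "g$1*g$1+g$2*g$2+g$3*g$3 = 1" and gp: "g$1*p$1+g$2*p$2+g$3*p$3 = 0" using assms by (auto simp: x TS2_comp)
  have "demchenko_field \<tau> \<epsilon> k x \<in> tangent_TS2 x"
    unfolding x field_comp tan_comp
    using gp gg by (simp only: vector_3 fst_conv snd_conv) algebra
  moreover have "omega2 (k/\<epsilon>^2) (demchenko_field \<tau> \<epsilon> k x) v = - frechet_derivative (demchenko_h \<tau> \<epsilon>) (at x) v"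
    if "v \<in> tangent_TS2 x" for v
  proof -
    obtain a b where v: "v = (a,b)" by (cases v)
    have ei: "\<epsilon>^2 * inverse (\<epsilon>^2) = 1" using assms by simp
    have ga: "g$1*a$1+g$2*a$2+g$3*a$3 = 0" using that by (simp add: x v tan_comp)
    show ?thesis unfolding omega2_alt dh x v field_comp inner3
      using ga ei by (simp only: vector_3 fst_conv snd_conv) algebra
  qed
  ultimately show ?thesis by (simp add: is_ham_vf_def)
qed


definition good :: "real \<Rightarrow> pt \<Rightarrow> bool" where
  "good c x \<longleftrightarrow> (snd x$1 \<noteq> 0 \<or> snd x$2 \<noteq> 0 \<or> snd x$3 \<noteq> 0) \<and> (fst x$3 \<noteq> 0 \<or> snd x$3 \<noteq> 0)
     \<and> (snd x$1 \<noteq> c*fst x$2 \<or> snd x$2 \<noteq> - c*fst x$1 \<or> snd x$3 \<noteq> 0)"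

lemma good_vec: "good c (g,p) \<longleftrightarrow> p \<noteq> 0 \<and> (g$3 \<noteq> 0 \<or> p$3 \<noteq> 0) \<and> p \<noteq> vector [c*g$2, - c*g$1, 0]"
  by (auto simp: good_def vec3_eq)

lemma sq3: "(x::real)*x+y*y+z*z = 0 \<Longrightarrow> x=0 \<and> y=0 \<and> z=0"
proof -
  assume h: "x*x+y*y+z*z = 0"
  have "x*x = 0" "y*y = 0" "z*z = 0"
    using h zero_le_square[of x] zero_le_square[of y] zero_le_square[of z] by linarith+
  then show ?thesis by simp
qed

lemma key:
  fixes g1 g2 p1 p2 c :: real
  assumes "g1*p1+g2*p2 = 0" "p1*p1+p2*p2 \<noteq> 0" "\<not>(p1 = c*g2 \<and> p2 = -c*g1)"
  shows "p1*p1+p2*p2 \<noteq> c*(p1*g2 - p2*g1)"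
proof
  assume eq: "p1*p1+p2*p2 = c*(p1*g2 - p2*g1)"
  define m where "m = p1*g2 - p2*g1"
  have id: "(p1*p1+p2*p2)*(g1*g1+g2*g2) = m*m" using assms(1) unfolding m_def by algebra
  have m0: "m \<noteq> 0" using eq assms(2) m_def by auto
  have "c*m*(g1*g1+g2*g2) = m*m" using id eq m_def by simp
  then have "m * (c*(g1*g1+g2*g2)) = m * m" by (simp add: ac_simps)
  then have cr: "c*(g1*g1+g2*g2) = m" using m0 by simp
  have "(p1 - c*g2)*(p1 - c*g2) + (p2 + c*g1)*(p2 + c*g1) = 0"
    using eq cr unfolding m_def by algebra
  then have "p1 - c*g2 = 0 \<and> p2 + c*g1 = 0" by simp
  then show False using assms(3) by auto
qed

lemma good_indep:
  assumes "\<epsilon> \<noteq> 0" "\<tau> > 0" "(g,p) \<in> TS2" "good (k/\<epsilon>^2) (g,p)"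
  and H: "\<forall>v\<in>tangent_TS2 (g,p). a * frechet_derivative (demchenko_h \<tau> \<epsilon>) (at (g,p)) v
             + b * frechet_derivative (demchenko_Phi \<epsilon> k) (at (g,p)) v = 0"
  shows "a = 0 \<and> b = 0"
proof -
  have gg: "g$1*g$1+g$2*g$2+g$3*g$3 = 1" and gp: "g$1*p$1+g$2*p$2+g$3*p$3 = 0" using assms by (auto simp: TS2_comp)
  have p0: "\<not>(p$1=0 \<and> p$2=0 \<and> p$3=0)" and g3p3: "g$3\<noteq>0 \<or> p$3\<noteq>0"
    and pq: "\<not>(p$1 = k/\<epsilon>^2*g$2 \<and> p$2 = -(k/\<epsilon>^2)*g$1 \<and> p$3 = 0)"
    using assms(4) by (auto simp: good_def)
  define L where "L = (vector [g$2*p$3 - g$3*p$2, g$3*p$1 - g$1*p$3, g$1*p$2 - g$2*p$1] :: real^3)"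
  define R where "R = (vector [p$2*g$3 - p$3*g$2, p$3*g$1 - p$1*g$3, p$1*g$2 - p$2*g$1] :: real^3)"
  have "(0, L) \<in> tangent_TS2 (g,p)" unfolding tan_comp L_def
    by (simp only: vector_3 zero_index) algebra
  with H have EL: "a * frechet_derivative (demchenko_h \<tau> \<epsilon>) (at (g,p)) (0,L)
             + b * frechet_derivative (demchenko_Phi \<epsilon> k) (at (g,p)) (0,L) = 0" by blast
  have bp3: "b * p$3 = 0" using EL gg gp unfolding dh dPhi L_def
    by (simp only: vector_3 zero_index fst_conv snd_conv) algebra
  have "(R, 0) \<in> tangent_TS2 (g,p)" unfolding tan_comp R_def
    by (simp only: vector_3 zero_index) algebra
  with H have ER: "a * frechet_derivative (demchenko_h \<tau> \<epsilon>) (at (g,p)) (R,0)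
             + b * frechet_derivative (demchenko_Phi \<epsilon> k) (at (g,p)) (R,0) = 0" by blast
  have "(0, p) \<in> tangent_TS2 (g,p)" unfolding tan_comp using gp by simp
  with H have Ep: "a * frechet_derivative (demchenko_h \<tau> \<epsilon>) (at (g,p)) (0,p)
             + b * frechet_derivative (demchenko_Phi \<epsilon> k) (at (g,p)) (0,p) = 0" by blast
  have b0: "b = 0"
  proof (cases "p$3 = 0")
    case False then show ?thesis using bp3 by simp
  next
    case True
    then have g3: "g$3 \<noteq> 0" using g3p3 by simp
    have E2: "b * (g$3 * ((p$1*p$1+p$2*p$2) - k/\<epsilon>^2*(p$1*g$2 - p$2*g$1))) = 0"
      using ER True unfolding dh dPhi R_def
      by (simp only: vector_3 zero_index fst_conv snd_conv) algebra
    have "p$1*p$1+p$2*p$2 \<noteq> k/\<epsilon>^2*(p$1*g$2 - p$2*g$1)"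
    proof (rule key)
      show "g$1*p$1+g$2*p$2 = 0" using gp True by simp
      show "p$1*p$1+p$2*p$2 \<noteq> 0" using p0 True by simp
      show "\<not>(p$1 = k/\<epsilon>^2*g$2 \<and> p$2 = -(k/\<epsilon>^2)*g$1)" using pq True by simp
    qed
    then show ?thesis using E2 g3 by simp
  qed
  have "a * (\<epsilon>^2/\<tau> * (p$1*p$1+p$2*p$2+p$3*p$3)) = 0"
    using Ep b0 unfolding dh by simp
  moreover have "p$1*p$1+p$2*p$2+p$3*p$3 \<noteq> 0" using p0 sq3 by blast
  ultimately have "a = 0" using assms(1,2) by simp
  then show ?thesis using b0 by simp
qed

lemma notgood_dep:
  assumes "(g,p) \<in> TS2" "\<not> good (k/\<epsilon>^2) (g,p)"
  shows "\<exists>b. \<forall>v\<in>tangent_TS2 (g,p). 1 * frechet_derivative (demchenko_h \<tau> \<epsilon>) (at (g,p)) v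
             + b * frechet_derivative (demchenko_Phi \<epsilon> k) (at (g,p)) v = 0"
proof -
  have gg: "g$1*g$1+g$2*g$2+g$3*g$3 = 1" and gp: "g$1*p$1+g$2*p$2+g$3*p$3 = 0" using assms by (auto simp: TS2_comp)
  consider "p$1=0 \<and> p$2=0 \<and> p$3=0" | "g$3 = 0 \<and> p$3 = 0" | "p$1 = k/\<epsilon>^2*g$2 \<and> p$2 = -(k/\<epsilon>^2)*g$1 \<and> p$3 = 0"
    using assms(2) unfolding good_def by auto
  then show ?thesis
  proof cases
    case 1
    show ?thesis
    proof (rule exI[of _ 0], intro ballI)
      fix v assume "v \<in> tangent_TS2 (g,p)"
      show "1 * frechet_derivative (demchenko_h \<tau> \<epsilon>) (at (g,p)) v + 0 * frechet_derivative (demchenko_Phi \<epsilon> k) (at (g,p)) v = 0"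
        unfolding dh using 1 by simp
    qed
  next
    case 2
    show ?thesis
    proof (rule exI[of _ "\<epsilon>^2/\<tau> * (p$1*g$2 - p$2*g$1)"], intro ballI)
      fix v assume "v \<in> tangent_TS2 (g,p)"
      moreover obtain a b where v: "v = (a,b)" by (cases v)
      ultimately have ga: "g$1*a$1+g$2*a$2+g$3*a$3 = 0" by (simp add: tan_comp)
      show "1 * frechet_derivative (demchenko_h \<tau> \<epsilon>) (at (g,p)) v + \<epsilon>^2/\<tau> * (p$1*g$2 - p$2*g$1) * frechet_derivative (demchenko_Phi \<epsilon> k) (at (g,p)) v = 0"
        unfolding dh dPhi v using 2 gg gp ga by (elim conjE; simp only: fst_conv snd_conv; algebra)
    qed
  next
    case 3
    show ?thesis
    proof (rule exI[of _ "\<epsilon>^2/\<tau> * (k/\<epsilon>^2)"], intro ballI)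
      fix v assume "v \<in> tangent_TS2 (g,p)"
      moreover obtain a b where v: "v = (a,b)" by (cases v)
      ultimately have ga: "g$1*a$1+g$2*a$2+g$3*a$3 = 0" by (simp add: tan_comp)
      show "1 * frechet_derivative (demchenko_h \<tau> \<epsilon>) (at (g,p)) v + \<epsilon>^2/\<tau> * (k/\<epsilon>^2) * frechet_derivative (demchenko_Phi \<epsilon> k) (at (g,p)) v = 0"
        proof -
        have h1: "p$1 = k/\<epsilon>^2*g$2" and h2: "p$2 = -(k/\<epsilon>^2)*g$1" and h3: "p$3 = 0" using 3 by auto
        show ?thesis unfolding dh dPhi v fst_conv snd_conv h1 h2 h3 by algebra
      qed
    qed
  qed
qed

lemma cont_comp: "continuous_on S (\<lambda>x::pt. fst x $ i)" "continuous_on S (\<lambda>x::pt. snd x $ i)"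
  by (auto intro!: linear_continuous_on bounded_linear_compose[OF bounded_linear_vec_nth] bounded_linear_fst bounded_linear_snd)

lemma open_good: "open {x. good c x}"
  unfolding good_def
  by (intro open_Collect_conj open_Collect_disj open_Collect_neq continuous_intros cont_comp)

lemma dense_good:
  assumes "x \<in> TS2" shows "x \<in> closure {y\<in>TS2. good c y}"
proof -
  obtain g p where x: "x = (g,p)" by (cases x)
  have ggc: "g$1*g$1+g$2*g$2+g$3*g$3 = 1" and gpc: "g$1*p$1+g$2*p$2+g$3*p$3 = 0"
    using assms by (auto simp: x TS2_comp)
  show ?thesis
  proof (cases "good c (g,p)")
    case True
    then have "x \<in> {y\<in>TS2. good c y}" using assms x by simp
    then show ?thesis by (rule closure_subset[THEN subsetD])
  next
    case ng: False
    have dist_eq: "\<And>p'. dist (g,p') (g,p) = norm (p' - p)" by (simp add: dist_Pair_Pair dist_norm)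
    show ?thesis unfolding x closure_approachable
    proof (intro allI impI)
      fix e :: real assume e: "e > 0"
      show "\<exists>y\<in>{y\<in>TS2. good c y}. dist y (g,p) < e"
      proof (cases "g$3 = 0")
        case True
        define t where "t = (if p$3 + e/2 = 0 then e/4 else e/2)"
        define e3 where "e3 = (vector [0,0,1] :: real^3)"
        have t: "t > 0" "t < e" "p$3 + t \<noteq> 0" using e by (auto simp: t_def)
        have "(g, p + t *\<^sub>R e3) \<in> TS2" using ggc gpc True
          by (simp add: TS2_comp e3_def algebra_simps)
        moreover have "good c (g, p + t *\<^sub>R e3)" using t(3) by (simp add: good_def e3_def)
        moreover have "norm e3 = 1" by (simp add: e3_def norm_eq_sqrt_inner inner3)
        then have "dist (g, p + t *\<^sub>R e3) (g,p) < e" using t by (simp add: dist_eq)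
        ultimately show ?thesis by blast
      next
        case False
        define q where "q = (vector [c*g$2, - c*g$1, 0] :: real^3)"
        define w where "w = (if q = 0 then vector [g$3, 0, - g$1] else q)"
        have w0: "w \<noteq> 0" using False by (auto simp: w_def vec3_eq)
        have gw: "g$1*w$1+g$2*w$2+g$3*w$3 = 0" by (auto simp: w_def q_def algebra_simps)
        define t where "t = min (1/2) (e/(2*norm w))"
        have nw: "norm w > 0" using w0 by simp
        have t: "t > 0" "t < 1" using e nw by (auto simp: t_def)
        have "t * norm w \<le> e/(2*norm w) * norm w" using nw by (intro mult_right_mono) (auto simp: t_def)
        also have "\<dots> = e/2" using nw by simp
        finally have tw: "t * norm w < e" using e by simp
        have pq: "p = 0 \<or> p = q" using ng False by (auto simp: good_vec q_def)
        have "(g, p + t *\<^sub>R w) \<in> TS2" using ggc gpc gw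
        proof -
          have "g$1*(p$1 + t*w$1)+g$2*(p$2 + t*w$2)+g$3*(p$3+t*w$3) = (g$1*p$1+g$2*p$2+g$3*p$3) + t*(g$1*w$1+g$2*w$2+g$3*w$3)"
            by (simp add: algebra_simps)
          then show ?thesis using ggc gpc gw by (simp add: TS2_comp)
        qed
        moreover have "p + t *\<^sub>R w \<noteq> 0 \<and> p + t *\<^sub>R w \<noteq> q"
        proof (cases "p = 0")
          case True
          have "t *\<^sub>R w \<noteq> q"
          proof (cases "q = 0")
            case True then show ?thesis using t w0 by simp
          next
            case False
            then have "w = q" by (simp add: w_def)
            show ?thesis
            proof
              assume eq: "t *\<^sub>R w = q"
              have "(t - 1) *\<^sub>R q = 0" using eq \<open>w = q\<close> by (simp add: algebra_simps)
              then show False using t False by simp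
            qed
          qed
          then show ?thesis using True t w0 by simp
        next
          case pnz: False
          then have pq': "p = q" using pq by simp
          then have "q \<noteq> 0" using pnz by simp
          then have wq: "w = q" by (simp add: w_def)
          have "p + t *\<^sub>R w = (1 + t) *\<^sub>R q" using pq' wq by (simp add: algebra_simps)
          moreover have "(1 + t) *\<^sub>R q \<noteq> 0" using t \<open>q \<noteq> 0\<close> by simp
          moreover have "(1 + t) *\<^sub>R q \<noteq> q"
          proof
            assume eq: "(1 + t) *\<^sub>R q = q"
            have "t *\<^sub>R q = 0" using eq by (simp add: algebra_simps)
            then show False using t \<open>q \<noteq> 0\<close> by simp
          qed
          ultimately show ?thesis by simp
        qed
        then have "good c (g, p + t *\<^sub>R w)" using False by (simp add: good_vec q_def)
        moreover have "dist (g, p + t *\<^sub>R w) (g,p) < e" using t tw by (simp add: dist_eq)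
        ultimately show ?thesis by blast
      qed
    qed
  qed
qed

lemma S_pt:
  assumes "\<epsilon> \<noteq> 0" "\<tau> > 0" "(g,p) \<in> TS2"
  shows "(\<forall>a b::real. (\<forall>v\<in>tangent_TS2 (g,p). a * frechet_derivative (demchenko_h \<tau> \<epsilon>) (at (g,p)) v
             + b * frechet_derivative (demchenko_Phi \<epsilon> k) (at (g,p)) v = 0) \<longrightarrow> a = 0 \<and> b = 0)
         \<longleftrightarrow> good (k/\<epsilon>^2) (g,p)"
proof
  assume I: "\<forall>a b::real. (\<forall>v\<in>tangent_TS2 (g,p). a * frechet_derivative (demchenko_h \<tau> \<epsilon>) (at (g,p)) v
             + b * frechet_derivative (demchenko_Phi \<epsilon> k) (at (g,p)) v = 0) \<longrightarrow> a = 0 \<and> b = 0"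
  show "good (k/\<epsilon>^2) (g,p)"
  proof (rule ccontr)
    assume ng: "\<not> good (k/\<epsilon>^2) (g,p)"
    obtain b where B: "\<forall>v\<in>tangent_TS2 (g,p). 1 * frechet_derivative (demchenko_h \<tau> \<epsilon>) (at (g,p)) v
             + b * frechet_derivative (demchenko_Phi \<epsilon> k) (at (g,p)) v = 0"
      using notgood_dep[OF assms(3) ng, where \<tau> = \<tau>] by (elim exE)
    have "(1::real) = 0 \<and> b = 0" using I B by (elim allE impE)
    then show False by simp
  qed
next
  assume G: "good (k/\<epsilon>^2) (g,p)"
  show "\<forall>a b::real. (\<forall>v\<in>tangent_TS2 (g,p). a * frechet_derivative (demchenko_h \<tau> \<epsilon>) (at (g,p)) v
             + b * frechet_derivative (demchenko_Phi \<epsilon> k) (at (g,p)) v = 0) \<longrightarrow> a = 0 \<and> b = 0"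
  proof (intro allI impI)
    fix a b :: real
    assume H: "\<forall>v\<in>tangent_TS2 (g,p). a * frechet_derivative (demchenko_h \<tau> \<epsilon>) (at (g,p)) v
             + b * frechet_derivative (demchenko_Phi \<epsilon> k) (at (g,p)) v = 0"
    show "a = 0 \<and> b = 0" by (rule good_indep[OF assms G H])
  qed
qed

lemma S_eq:
  assumes "\<epsilon> \<noteq> 0" "\<tau> > 0"
  shows "{x\<in>TS2. \<forall>a b::real. (\<forall>v\<in>tangent_TS2 x. a * frechet_derivative (demchenko_h \<tau> \<epsilon>) (at x) v
             + b * frechet_derivative (demchenko_Phi \<epsilon> k) (at x) v = 0) \<longrightarrow> a = 0 \<and> b = 0}
       = TS2 \<inter> {x. good (k/\<epsilon>^2) x}"
proof (intro set_eqI)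
  fix x :: pt
  obtain g p where x: "x = (g,p)" by (cases x)
  show "x \<in> {x\<in>TS2. \<forall>a b::real. (\<forall>v\<in>tangent_TS2 x. a * frechet_derivative (demchenko_h \<tau> \<epsilon>) (at x) v
             + b * frechet_derivative (demchenko_Phi \<epsilon> k) (at x) v = 0) \<longrightarrow> a = 0 \<and> b = 0}
       \<longleftrightarrow> x \<in> TS2 \<inter> {x. good (k/\<epsilon>^2) x}"
    unfolding x mem_Collect_eq Int_iff
  proof (intro iffI conjI)
    assume h: "(g,p) \<in> TS2 \<and> (\<forall>a b::real. (\<forall>v\<in>tangent_TS2 (g,p). a * frechet_derivative (demchenko_h \<tau> \<epsilon>) (at (g,p)) v
             + b * frechet_derivative (demchenko_Phi \<epsilon> k) (at (g,p)) v = 0) \<longrightarrow> a = 0 \<and> b = 0)"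
    show "(g,p) \<in> TS2" by (rule conjunct1[OF h])
    show "good (k/\<epsilon>^2) (g,p)" by (rule iffD1[OF S_pt[OF assms conjunct1[OF h]] conjunct2[OF h]])
  next
    assume h: "(g,p) \<in> TS2 \<and> good (k/\<epsilon>^2) (g,p)"
    show "(g,p) \<in> TS2" by (rule conjunct1[OF h])
    show "\<forall>a b::real. (\<forall>v\<in>tangent_TS2 (g,p). a * frechet_derivative (demchenko_h \<tau> \<epsilon>) (at (g,p)) v
             + b * frechet_derivative (demchenko_Phi \<epsilon> k) (at (g,p)) v = 0) \<longrightarrow> a = 0 \<and> b = 0"
      by (rule iffD2[OF S_pt[OF assms conjunct1[OF h]] conjunct2[OF h]])
  qed
qed

theorem theorem9p3:
  fixes \<tau> \<epsilon> \<kappa>12 :: real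
  assumes "\<tau> > 0" and "\<epsilon> \<noteq> 0"
  shows "liouville_integrable2 TS2 tangent_TS2 (omega2 (\<kappa>12 / \<epsilon>^2))
           (demchenko_field \<tau> \<epsilon> \<kappa>12) (demchenko_h \<tau> \<epsilon>) (demchenko_Phi \<epsilon> \<kappa>12)"
  unfolding liouville_integrable2_def Let_def
proof (intro conjI)
  show "\<forall>x\<in>TS2. \<forall>u\<in>tangent_TS2 x. (\<forall>v\<in>tangent_TS2 x. omega2 (\<kappa>12 / \<epsilon>^2) u v = 0) \<longrightarrow> u = 0"
    using nondeg by blast
  show "\<forall>x\<in>TS2. is_ham_vf tangent_TS2 (omega2 (\<kappa>12 / \<epsilon>^2)) (demchenko_h \<tau> \<epsilon>) x (demchenko_field \<tau> \<epsilon> \<kappa>12 x)"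
    using hamV assms(2) by blast
  show "\<forall>x\<in>TS2. frechet_derivative (demchenko_h \<tau> \<epsilon>) (at x) (demchenko_field \<tau> \<epsilon> \<kappa>12 x) = 0 \<and>
        frechet_derivative (demchenko_Phi \<epsilon> \<kappa>12) (at x) (demchenko_field \<tau> \<epsilon> \<kappa>12 x) = 0"
    using fi_h fi_Phi assms(2) by blast
  show "\<forall>x\<in>TS2. \<forall>X1 X2. is_ham_vf tangent_TS2 (omega2 (\<kappa>12 / \<epsilon>^2)) (demchenko_h \<tau> \<epsilon>) x X1 \<longrightarrow>
        is_ham_vf tangent_TS2 (omega2 (\<kappa>12 / \<epsilon>^2)) (demchenko_Phi \<epsilon> \<kappa>12) x X2 \<longrightarrow>
        omega2 (\<kappa>12 / \<epsilon>^2) X1 X2 = 0"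
  proof (intro ballI allI impI)
    fix x X1 X2
    assume xT: "x \<in> TS2"
      and H1: "is_ham_vf tangent_TS2 (omega2 (\<kappa>12 / \<epsilon>^2)) (demchenko_h \<tau> \<epsilon>) x X1"
      and H2: "is_ham_vf tangent_TS2 (omega2 (\<kappa>12 / \<epsilon>^2)) (demchenko_Phi \<epsilon> \<kappa>12) x X2"
    have HV: "is_ham_vf tangent_TS2 (omega2 (\<kappa>12 / \<epsilon>^2)) (demchenko_h \<tau> \<epsilon>) x (demchenko_field \<tau> \<epsilon> \<kappa>12 x)"
      using hamV assms(2) xT by blast
    have "X1 - demchenko_field \<tau> \<epsilon> \<kappa>12 x \<in> tangent_TS2 x"
      using H1 HV tangent_diff by (auto simp: is_ham_vf_def)
    moreover have "\<forall>v\<in>tangent_TS2 x. omega2 (\<kappa>12 / \<epsilon>^2) (X1 - demchenko_field \<tau> \<epsilon> \<kappa>12 x) v = 0"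
      using H1 HV by (auto simp: is_ham_vf_def omega2_diff)
    ultimately have "X1 - demchenko_field \<tau> \<epsilon> \<kappa>12 x = 0" using nondeg xT by blast
    then have X1: "X1 = demchenko_field \<tau> \<epsilon> \<kappa>12 x" by simp
    have "omega2 (\<kappa>12 / \<epsilon>^2) X1 X2 = - omega2 (\<kappa>12 / \<epsilon>^2) X2 X1" by (rule omega2_antisym)
    also have "\<dots> = frechet_derivative (demchenko_Phi \<epsilon> \<kappa>12) (at x) X1"
      using H2 H1 by (simp add: is_ham_vf_def)
    also have "\<dots> = 0" using X1 fi_Phi assms(2) by simp
    finally show "omega2 (\<kappa>12 / \<epsilon>^2) X1 X2 = 0" .
  qed
  show "openin (top_of_set TS2) {x\<in>TS2. \<forall>a b::real. (\<forall>v\<in>tangent_TS2 x. a * frechet_derivative (demchenko_h \<tau> \<epsilon>) (at x) v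
             + b * frechet_derivative (demchenko_Phi \<epsilon> \<kappa>12) (at x) v = 0) \<longrightarrow> a = 0 \<and> b = 0}"
    unfolding S_eq[OF assms(2,1)] by (intro openin_open_Int open_good)
  show "TS2 \<subseteq> closure {x\<in>TS2. \<forall>a b::real. (\<forall>v\<in>tangent_TS2 x. a * frechet_derivative (demchenko_h \<tau> \<epsilon>) (at x) v
             + b * frechet_derivative (demchenko_Phi \<epsilon> \<kappa>12) (at x) v = 0) \<longrightarrow> a = 0 \<and> b = 0}"
    unfolding S_eq[OF assms(2,1)] using dense_good by (auto simp: Collect_conj_eq[symmetric] Int_def)
qed

end
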